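(* Let $n,m,k\ge1$, $C:\{0,1\}^n\to\{0,1\}^m$, $V:\{0,1\}^m\times\{0,1\}^\ell\to\{0,1\}$, $\varepsilon\in(0,1/25]$, $\alpha>1$, $p_H,p_{UH}\in[0,1]$ with $p_H\in[g_H\pm\frac45\sqrt\varepsilon]$ and $p_{UH}\in[g_{UH}\pm10\sqrt\varepsilon]$. Let $y_1,\dots,y_k\in\{0,1\}^m$ be arbitrary, let $u:[k]\to\mathbb{Z}_{\ge0}\cup\{\infty\}$, $\mathcal{Y}\subseteq[k]$ and $w_i\in\{0,1\}^\ell$ ($i\in\mathcal{Y}$), and let $\mathcal{L}=\{i\in[k]:2^{-(u(i)+1)\varepsilon}<\alpha2^{-m}\}$, $\mathcal{H}=[k]\setminus\mathcal{L}$. Assume: (a) $|\mathcal{Y}|/k\in[g_{UY}\pm\varepsilon]$; (b) $V(y_i,w_i)=1$ for all $i\in\mathcal{Y}$; (c) $|\mathcal{H}|/k\in[p_{UH}\pm3\sqrt\varepsilon]$; (d) $\frac1k\sum_{i\in\mathcal{L}}2^m2^{-u(i)\varepsilon}\in[1-p_H\pm5\sqrt\varepsilon]$; (1) $\Pr_{y\leftarrow\mathcal{D}^C}[\mathcal{D}^C(y)\in(1\pm4\varepsilon)\alpha2^{-m}]\le\sqrt\varepsilon$; (2) for all $i$: $u'(i)=\infty\Rightarrow u(i)=\infty$; (3) for all $i$: $u(i)=\infty$ or $\mathcal{D}^C(y_i)>(1-\varepsilon/2)2^{-(u(i)+1)\varepsilon}$; (4) $\frac1k|\{i:y_i\in\mathcal{M}\}|<3\sqrt\varepsilon/\alpha$;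 (5) $|\mathcal{Y}'|/k\in[g_{UY}\pm\varepsilon]$; (6) $|\mathcal{H}'|/k\in[g_{UH}\pm3\sqrt\varepsilon]$; (7) $\frac1k\sum_{i\in\mathcal{L}'}2^m2^{-u'(i)\varepsilon}\in[1-g_H\pm5\sqrt\varepsilon]$. Then: (i) $u(i)\ge u'(i)-1$ for all $i\in[k]$; (ii) $|\mathcal{L}'\setminus\mathcal{L}|\le3k\sqrt\varepsilon$; (iii) $|\mathcal{L}\setminus\mathcal{L}'|\le19k\sqrt\varepsilon$; (iv) $\frac1k\sum_{i\in\mathcal{L}'\setminus\mathcal{L}}2^m2^{-u'(i)\varepsilon}\le6\sqrt\varepsilon\alpha$ and $\frac1k\sum_{i\in\mathcal{L}\setminus\mathcal{L}'}2^m2^{-u(i)\varepsilon}\le38\sqrt\varepsilon\alpha$; (v) $\frac1k\sum_{i\in\mathcal{L}\cap\mathcal{L}'}2^m2^{-u(i)\varepsilon}\in[1-g_H\pm44\sqrt\varepsilon\alpha]$ and $\frac1k\sum_{i\in\mathcal{L}\cap\mathcal{L}'}2^m2^{-u'(i)\varepsilon}\in[1-g_H\pm11\sqrt\varepsilon\alpha]$; (vi) $\mathrm{Gain}_{\mathcal{L}\cap\mathcal{L}'}(u',u)\le4\varepsilon$ and $\mathrm{Loss}_{\mathcal{L}\cap\mathcal{L}'}(u',u)\le59\sqrt\varepsilon\alpha$.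
   Context: $\mathcal{D}^C(y)=\Pr_{r\leftarrow\{0,1\}^n}[C(r)=y]$ for uniform $r$. For $y\in\{0,1\}^m$ write $y\in V$ if there is $w$ with $V(y,w)=1$. Let $t=\lceil n/\varepsilon\rceil$, $\mathcal{B}_j=\{y:\mathcal{D}^C(y)\in(2^{-(j+1)\varepsilon},2^{-j\varepsilon}]\}$ for $j\in\{0,\dots,t\}$, and $u'(y)=j$ if $y\in\mathcal{B}_j$, $u'(y)=\infty$ otherwise; conventions $2^{-\infty\varepsilon}=0$, $j<\infty$, $\infty+j=\infty$. $g_H=\Pr_{y\leftarrow\mathcal{D}^C}[\mathcal{D}^C(y)\ge\alpha2^{-m}]$, $g_{UH}=\Pr_{y\text{ uniform}}[\mathcal{D}^C(y)\ge\alpha2^{-m}]$, $g_{UY}=\Pr_{y\text{ uniform}}[y\in V]$, $g_{YL}=\Pr_{y\leftarrow\mathcal{D}^C}[\mathcal{D}^C(y)<\alpha2^{-m}\wedge y\in V]$. For the given $y_1,\dots,y_k$: $u'(i):=u'(y_i)$, $\mathcal{Y}'=\{i:y_i\in V\}$, $\mathcal{L}'=\{i:2^{-(u'(i)+1)\varepsilon}<\alpha2^{-m}\}$, $\mathcal{H}'=[k]\setminus\mathcal{L}'$, $\mathcal{M}=\{y:\mathcal{D}^C(y)\in(1\pm4\varepsilon)\alpha2^{-m}\}$. For labelings $u',u$ of $[k]$ and $\mathcal{A}\subseteq[k]$: $\mathrm{Loss}_{\mathcal{A}}(u',u)=\frac1k\sum_{i\in\mathcal{A}:u'(i)<u(i)}2^m(2^{-u'(i)\varepsilon}-2^{-u(i)\varepsilon})$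 and $\mathrm{Gain}_{\mathcal{A}}(u',u)=\frac1k\sum_{i\in\mathcal{A}:u'(i)>u(i)}2^m(2^{-u(i)\varepsilon}-2^{-u'(i)\varepsilon})$. $[a\pm b]=[a-b,a+b]$, $(1\pm\delta)x=[(1-\delta)x,(1+\delta)x]$. *)

theory Defs
  imports Complex_Main "HOL-Library.Extended_Nat"
begin

definition bitstrings :: "nat \<Rightarrow> bool list set" where
  "bitstrings n = {xs. length xs = n}"

definition DC :: "(bool list \<Rightarrow> bool list) \<Rightarrow> nat \<Rightarrow> bool list \<Rightarrow> real" where
  "DC C n y = real (card {r \<in> bitstrings n. C r = y}) / 2 ^ n"

text \<open>Pr_{y <- D^C}[P y] = Pr_{r uniform}[P (C r)].\<close>
definition prD :: "(bool list \<Rightarrow> bool list) \<Rightarrow> nat \<Rightarrow> (bool list \<Rightarrow> bool) \<Rightarrow> real" where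
  "prD C n P = real (card {r \<in> bitstrings n. P (C r)}) / 2 ^ n"

definition prU :: "nat \<Rightarrow> (bool list \<Rightarrow> bool) \<Rightarrow> real" where
  "prU m P = real (card {y \<in> bitstrings m. P y}) / 2 ^ m"

definition inV :: "(bool list \<Rightarrow> bool list \<Rightarrow> bool) \<Rightarrow> nat \<Rightarrow> bool list \<Rightarrow> bool" where
  "inV V l y \<longleftrightarrow> (\<exists>w \<in> bitstrings l. V y w)"

definition pw :: "real \<Rightarrow> enat \<Rightarrow> real" where
  "pw \<epsilon> u = (case u of enat j \<Rightarrow> 2 powr (- (real j * \<epsilon>)) | \<infinity> \<Rightarrow> 0)"

definition inBucket :: "(bool list \<Rightarrow> bool list) \<Rightarrow> nat \<Rightarrow> real \<Rightarrow> nat \<Rightarrow> bool list \<Rightarrow> bool" where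
  "inBucket C n \<epsilon> j y \<longleftrightarrow>
     2 powr (- ((real j + 1) * \<epsilon>)) < DC C n y \<and> DC C n y \<le> 2 powr (- (real j * \<epsilon>))"

definition uprime :: "(bool list \<Rightarrow> bool list) \<Rightarrow> nat \<Rightarrow> real \<Rightarrow> bool list \<Rightarrow> enat" where
  "uprime C n \<epsilon> y =
     (let t = nat \<lceil>real n / \<epsilon>\<rceil> in
      if \<exists>j \<le> t. inBucket C n \<epsilon> j y
      then enat (LEAST j. j \<le> t \<and> inBucket C n \<epsilon> j y) else \<infinity>)"

definition pm :: "real \<Rightarrow> real \<Rightarrow> real set" where
  "pm a b = {a - b .. a + b}"

definition Loss :: "nat \<Rightarrow> nat \<Rightarrow> real \<Rightarrow> nat set \<Rightarrow> (nat \<Rightarrow> enat) \<Rightarrow> (nat \<Rightarrow> enat) \<Rightarrow> real" where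
  "Loss k m \<epsilon> A u' u =
     (1 / real k) * (\<Sum>i \<in> {i \<in> A. u' i < u i}. 2 ^ m * (pw \<epsilon> (u' i) - pw \<epsilon> (u i)))"

definition Gain :: "nat \<Rightarrow> nat \<Rightarrow> real \<Rightarrow> nat set \<Rightarrow> (nat \<Rightarrow> enat) \<Rightarrow> (nat \<Rightarrow> enat) \<Rightarrow> real" where
  "Gain k m \<epsilon> A u' u =
     (1 / real k) * (\<Sum>i \<in> {i \<in> A. u' i > u i}. 2 ^ m * (pw \<epsilon> (u i) - pw \<epsilon> (u' i)))"

end

theory Submission imports Defs "HOL-Analysis.Analysis" begin

lemma two_powr_up: assumes "0 \<le> x" "x \<le> 1" shows "2 powr x \<le> 1 + (x::real)"
proof -
  have "exp ((1 - x) *\<^sub>R 0 + x *\<^sub>R ln 2) \<le> (1 - x) * exp 0 + x * exp (ln 2)"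
    by (rule convex_onD[OF exp_convex]) (use assms in auto)
  then show ?thesis by (simp add: powr_def mult.commute)
qed

lemma two_powr_down: assumes "0 \<le> x" "x \<le> 1" shows "2 powr (-x) \<le> 1 - (x::real)/2"
proof -
  have "exp ((1 - x) *\<^sub>R 0 + x *\<^sub>R (- ln 2)) \<le> (1 - x) * exp 0 + x * exp (- ln 2)"
    by (rule convex_onD[OF exp_convex]) (use assms in auto)
  then show ?thesis by (simp add: powr_def mult.commute exp_minus)
qed

lemma pw_nonneg: "pw e u \<ge> 0"
  by (cases u) (auto simp: pw_def)

lemma pw_pos: "u \<noteq> \<infinity> \<Longrightarrow> pw e u > 0"
  by (cases u) (auto simp: pw_def)

lemma pw_Suc: "pw e (u + 1) = 2 powr (-e) * pw e u"
proof (cases u)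
  case (enat j)
  have "enat j + 1 = enat (Suc j)" by (simp add: one_enat_def)
  moreover have "2 powr (- (real (Suc j) * e)) = 2 powr (-e) * 2 powr (- (real j * e))"
    by (simp add: powr_add[symmetric] algebra_simps)
  ultimately show ?thesis using enat by (simp add: pw_def)
qed (simp add: pw_def)

lemma pw_Suc': "pw e u = 2 powr e * pw e (u + 1)"
  by (simp add: pw_Suc powr_minus)

lemma pw_antimono: assumes "e > 0" "a \<le> b" shows "pw e b \<le> pw e a"
proof (cases b)
  case (enat jb)
  then obtain ja where a: "a = enat ja" using assms by (cases a) auto
  with enat assms have "ja \<le> jb" by simp
  then show ?thesis using a enat assms
    by (simp add: pw_def mult_right_mono)
next
  case infinity
  then show ?thesis using pw_nonneg[of e a] by (simp add: pw_def)
qed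

lemma pw_less_imp: assumes "e > 0" "pw e a < pw e b" shows "b < a"
  using pw_antimono[OF assms(1), of a b] assms(2) by (meson not_le linorder_not_less)

lemma uprime_bucket:
  assumes "uprime C n e y = enat j"
  shows "pw e (enat j + 1) < DC C n y \<and> DC C n y \<le> pw e (enat j)"
proof -
  define t where "t = nat \<lceil>real n / e\<rceil>"
  have ex: "\<exists>j \<le> t. inBucket C n e j y"
    using assms unfolding uprime_def t_def[symmetric] Let_def by (auto split: if_splits)
  then have "j = (LEAST j. j \<le> t \<and> inBucket C n e j y)"
    using assms unfolding uprime_def t_def[symmetric] Let_def by auto
  moreover have "(LEAST j. j \<le> t \<and> inBucket C n e j y) \<le> t \<and> inBucket C n e (LEAST j. j \<le> t \<and> inBucket C n e j y) y"
    using ex by (metis (mono_tags, lifting) LeastI)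
  ultimately have "inBucket C n e j y" by simp
  moreover have "enat j + 1 = enat (Suc j)" by (simp add: one_enat_def)
  ultimately show ?thesis by (simp add: inBucket_def pw_def add.commute)
qed

lemma DC_nonneg: "DC C n y \<ge> 0" by (simp add: DC_def)
lemma prD_nonneg: "prD C n P \<ge> 0" by (simp add: prD_def)


lemma pm_div: assumes "x / K \<in> pm a b" shows "a - b \<le> x / K \<and> x / K \<le> a + b"
  using assms by (simp add: pm_def)

lemma card_split: "finite A \<Longrightarrow> real (card A) = real (card (A \<inter> B)) + real (card (A - B))"
  using sum.Int_Diff[of A "\<lambda>_. 1::real" B] by simp

theorem mainTheorem8:
  fixes n m k l :: nat
    and C :: "bool list \<Rightarrow> bool list"
    and V :: "bool list \<Rightarrow> bool list \<Rightarrow> bool"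
    and \<epsilon> \<alpha> pH pUH :: real
    and y :: "nat \<Rightarrow> bool list"
    and u :: "nat \<Rightarrow> enat"
    and Y :: "nat set"
    and w :: "nat \<Rightarrow> bool list"
  defines "D \<equiv> DC C n"
    and "gH \<equiv> prD C n (\<lambda>z. DC C n z \<ge> \<alpha> * 2 powr (- real m))"
    and "gUH \<equiv> prU m (\<lambda>z. DC C n z \<ge> \<alpha> * 2 powr (- real m))"
    and "gUY \<equiv> prU m (inV V l)"
    and "u' \<equiv> (\<lambda>i. uprime C n \<epsilon> (y i))"
    and "L \<equiv> {i \<in> {1..k}. pw \<epsilon> (u i + 1) < \<alpha> * 2 powr (- real m)}"
    and "Y' \<equiv> {i \<in> {1..k}. inV V l (y i)}"
    and "L' \<equiv> {i \<in> {1..k}. pw \<epsilon> (uprime C n \<epsilon> (y i) + 1) < \<alpha> * 2 powr (- real m)}"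
    and "M \<equiv> {z. DC C n z \<in> {(1 - 4 * \<epsilon>) * \<alpha> * 2 powr (- real m) .. (1 + 4 * \<epsilon>) * \<alpha> * 2 powr (- real m)}}"
  assumes hn: "n \<ge> 1" and hm: "m \<ge> 1" and hk: "k \<ge> 1"
    and hC: "\<forall>r \<in> bitstrings n. C r \<in> bitstrings m"
    and heps: "0 < \<epsilon>" "\<epsilon> \<le> 1 / 25"
    and halpha: "\<alpha> > 1"
    and hpH01: "pH \<in> {0..1}" and hpUH01: "pUH \<in> {0..1}"
    and hpH: "pH \<in> pm gH (4 / 5 * sqrt \<epsilon>)"
    and hpUH: "pUH \<in> pm gUH (10 * sqrt \<epsilon>)"
    and hy: "\<forall>i \<in> {1..k}. y i \<in> bitstrings m"
    and hY: "Y \<subseteq> {1..k}"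
    and hw: "\<forall>i \<in> Y. w i \<in> bitstrings l"
    and ha: "real (card Y) / real k \<in> pm gUY \<epsilon>"
    and hb: "\<forall>i \<in> Y. V (y i) (w i)"
    and hc: "real (card ({1..k} - L)) / real k \<in> pm pUH (3 * sqrt \<epsilon>)"
    and hd: "(1 / real k) * (\<Sum>i \<in> L. 2 ^ m * pw \<epsilon> (u i)) \<in> pm (1 - pH) (5 * sqrt \<epsilon>)"
    and h1: "prD C n (\<lambda>z. z \<in> M) \<le> sqrt \<epsilon>"
    and h2: "\<forall>i \<in> {1..k}. u' i = \<infinity> \<longrightarrow> u i = \<infinity>"
    and h3: "\<forall>i \<in> {1..k}. u i = \<infinity> \<or> D (y i) > (1 - \<epsilon> / 2) * pw \<epsilon> (u i + 1)"
    and h4: "real (card {i \<in> {1..k}. y i \<in> M}) / real k < 3 * sqrt \<epsilon> / \<alpha>"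
    and h5: "real (card Y') / real k \<in> pm gUY \<epsilon>"
    and h6: "real (card ({1..k} - L')) / real k \<in> pm gUH (3 * sqrt \<epsilon>)"
    and h7: "(1 / real k) * (\<Sum>i \<in> L'. 2 ^ m * pw \<epsilon> (u' i)) \<in> pm (1 - gH) (5 * sqrt \<epsilon>)"
  shows "(\<forall>i \<in> {1..k}. u i \<ge> u' i - 1)
    \<and> real (card (L' - L)) \<le> 3 * real k * sqrt \<epsilon>
    \<and> real (card (L - L')) \<le> 19 * real k * sqrt \<epsilon>
    \<and> (1 / real k) * (\<Sum>i \<in> L' - L. 2 ^ m * pw \<epsilon> (u' i)) \<le> 6 * sqrt \<epsilon> * \<alpha>
    \<and> (1 / real k) * (\<Sum>i \<in> L - L'. 2 ^ m * pw \<epsilon> (u i)) \<le> 38 * sqrt \<epsilon> * \<alpha>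
    \<and> (1 / real k) * (\<Sum>i \<in> L \<inter> L'. 2 ^ m * pw \<epsilon> (u i)) \<in> pm (1 - gH) (44 * sqrt \<epsilon> * \<alpha>)
    \<and> (1 / real k) * (\<Sum>i \<in> L \<inter> L'. 2 ^ m * pw \<epsilon> (u' i)) \<in> pm (1 - gH) (11 * sqrt \<epsilon> * \<alpha>)
    \<and> Gain k m \<epsilon> (L \<inter> L') u' u \<le> 4 * \<epsilon>
    \<and> Loss k m \<epsilon> (L \<inter> L') u' u \<le> 59 * sqrt \<epsilon> * \<alpha>"
  proof -
  define K where "K = real k"
  define T where "T = \<alpha> * 2 powr (- real m)"
  have K0: "K > 0" using hk by (simp add: K_def)
  have T0: "T > 0" using halpha by (simp add: T_def)
  have hTm: "2 ^ m * T = \<alpha>" by (simp add: T_def powr_minus powr_realpow)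
  have s0: "sqrt \<epsilon> \<ge> 0" using heps by simp
  have es: "\<epsilon> \<le> sqrt \<epsilon>"
  proof -
    have "\<epsilon> * \<epsilon> \<le> \<epsilon>" using heps by (simp add: mult_le_cancel_left1)
    then show ?thesis using heps by (metis real_le_rsqrt power2_eq_square)
  qed
  have s5: "sqrt \<epsilon> \<le> 1/5"
  proof -
    have "sqrt \<epsilon> \<le> sqrt (1/25)" using heps by (simp only: real_sqrt_le_iff)
    also have "sqrt (1/25) = (1/5::real)" by (simp add: real_sqrt_divide)
    finally show ?thesis .
  qed
  have e1: "2 powr \<epsilon> \<le> 1 + \<epsilon>" using heps by (intro two_powr_up) auto
  have e2: "2 powr (-\<epsilon>) \<le> 1 - \<epsilon>/2" using heps by (intro two_powr_down) auto
  have memL: "\<And>i. i \<in> L \<longleftrightarrow> i \<in> {1..k} \<and> pw \<epsilon> (u i + 1) < T" by (simp add: L_def T_def)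
  have memL': "\<And>i. i \<in> L' \<longleftrightarrow> i \<in> {1..k} \<and> pw \<epsilon> (u' i + 1) < T" by (simp add: L'_def T_def u'_def)
  have sub: "L \<subseteq> {1..k}" "L' \<subseteq> {1..k}" using memL memL' by auto
  have finL: "finite L" "finite L'" "L \<subseteq> {1..k}" "L' \<subseteq> {1..k}" using sub finite_subset by auto
  have bucket: "\<And>i j. u' i = enat j \<Longrightarrow> pw \<epsilon> (enat j + 1) < D (y i) \<and> D (y i) \<le> pw \<epsilon> (enat j)"
    unfolding u'_def D_def by (rule uprime_bucket)
  have part_i: "\<And>i. i \<in> {1..k} \<Longrightarrow> u i \<ge> u' i - 1"
  proof -
    fix i assume i: "i \<in> {1..k}"
    show "u i \<ge> u' i - 1"
    proof (cases "u i = \<infinity>")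
      case True then show ?thesis by simp
    next
      case False
      then obtain a where ua: "u i = enat a" by auto
      have Dgt: "D (y i) > (1 - \<epsilon>/2) * pw \<epsilon> (u i + 1)" using h3 i False by metis
      have "u' i \<noteq> \<infinity>" using h2 i False by auto
      then obtain j where uj: "u' i = enat j" by auto
      have Dle: "D (y i) \<le> pw \<epsilon> (enat j)" using bucket[OF uj] by simp
      have "j \<le> Suc a"
      proof (rule ccontr)
        assume "\<not> j \<le> Suc a"
        then have "enat (Suc (Suc a)) \<le> enat j" by simp
        then have "pw \<epsilon> (enat j) \<le> pw \<epsilon> (enat (Suc (Suc a)))" using heps by (intro pw_antimono) auto
        also have "enat (Suc (Suc a)) = (u i + 1) + 1" using ua by (simp add: one_enat_def)
        also have "pw \<epsilon> ((u i + 1) + 1) = 2 powr (-\<epsilon>) * pw \<epsilon> (u i + 1)" by (rule pw_Suc)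
        also have "\<dots> \<le> (1 - \<epsilon>/2) * pw \<epsilon> (u i + 1)" using e2 pw_nonneg by (intro mult_right_mono) auto
        finally show False using Dgt Dle by simp
      qed
      then show ?thesis using ua uj by (simp add: one_enat_def)
    qed
  qed
  have claimB: "\<And>i. i \<in> L' - L \<Longrightarrow> y i \<in> M \<and> 2 ^ m * pw \<epsilon> (u' i) \<le> 2 * \<alpha>"
  proof -
    fix i assume iLL: "i \<in> L' - L"
    then have i: "i \<in> {1..k}" and lt': "pw \<epsilon> (u' i + 1) < T" and ge: "\<not> pw \<epsilon> (u i + 1) < T"
      using memL memL' by auto
    have "u i + 1 < u' i + 1" using ge lt' heps by (intro pw_less_imp[of \<epsilon>]) auto
    have "u i \<noteq> \<infinity>"
    proof
      assume "u i = \<infinity>"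
      then have "pw \<epsilon> (u i + 1) = 0" by (simp add: pw_def)
      then show False using ge T0 by simp
    qed
    then obtain a where ua: "u i = enat a" by auto
    have "u' i \<noteq> \<infinity>" using h2 i ua by auto
    then obtain j where uj: "u' i = enat j" by auto
    have "a < j" using \<open>u i + 1 < u' i + 1\<close> ua uj by (simp add: one_enat_def)
    moreover have "j - 1 \<le> a" using part_i[OF i] ua uj by (simp add: one_enat_def)
    ultimately have ja: "j = Suc a" by simp
    have eq: "enat j = u i + 1" using ua ja by (simp add: one_enat_def)
    have Dle: "D (y i) \<le> pw \<epsilon> (enat j)" using bucket[OF uj] by simp
    have Dgt: "D (y i) > (1 - \<epsilon>/2) * pw \<epsilon> (u i + 1)" using h3 i \<open>u i \<noteq> \<infinity>\<close> by metis
    have "(1 - \<epsilon>/2) * T \<le> (1 - \<epsilon>/2) * pw \<epsilon> (u i + 1)" using ge heps by (intro mult_left_mono) auto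
    moreover have "(1 - 4*\<epsilon>) * T \<le> (1 - \<epsilon>/2) * T" using heps T0 by (intro mult_right_mono) auto
    ultimately have low: "(1 - 4*\<epsilon>) * T \<le> D (y i)" using Dgt by linarith
    have "pw \<epsilon> (enat j) = 2 powr \<epsilon> * pw \<epsilon> (enat j + 1)" by (rule pw_Suc')
    also have "\<dots> \<le> (1 + \<epsilon>) * T"
      using lt' uj e1 pw_nonneg[of \<epsilon> "enat j + 1"] heps
      by (intro mult_mono) auto
    finally have pj: "pw \<epsilon> (enat j) \<le> (1 + \<epsilon>) * T" .
    have "(1 + \<epsilon>) * T \<le> (1 + 4*\<epsilon>) * T" using heps T0 by (intro mult_right_mono) auto
    then have high: "D (y i) \<le> (1 + 4*\<epsilon>) * T" using Dle pj by linarith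
    have "y i \<in> M" using low high unfolding M_def D_def T_def by (simp add: mult.assoc)
    moreover have "2 ^ m * pw \<epsilon> (u' i) \<le> 2 ^ m * (2 * T)"
      proof (intro mult_left_mono)
      have "(1 + \<epsilon>) * T \<le> 2 * T" using heps T0 by (intro mult_right_mono) auto
      then show "pw \<epsilon> (u' i) \<le> 2 * T" using pj uj by simp
    qed simp
    moreover have "2 ^ m * (2 * T) = (2 * \<alpha> :: real)" using hTm by (simp add: mult.left_commute)
    ultimately show "y i \<in> M \<and> 2 ^ m * pw \<epsilon> (u' i) \<le> 2 * \<alpha>" by simp
  qed
  have claimC: "\<And>i. i \<in> L \<Longrightarrow> 2 ^ m * pw \<epsilon> (u i) \<le> 2 * \<alpha>"
  proof -
    fix i assume "i \<in> L"
    then have lt: "pw \<epsilon> (u i + 1) < T" using memL by auto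
    have "pw \<epsilon> (u i) = 2 powr \<epsilon> * pw \<epsilon> (u i + 1)" by (rule pw_Suc')
    also have "\<dots> \<le> (1 + \<epsilon>) * T"
      using lt e1 pw_nonneg[of \<epsilon> "u i + 1"] heps by (intro mult_mono) auto
    also have "\<dots> \<le> 2 * T" using heps T0 by (intro mult_right_mono) auto
    finally have "2 ^ m * pw \<epsilon> (u i) \<le> 2 ^ m * (2 * T)" by (intro mult_left_mono) auto
    moreover have "2 ^ m * (2 * T) = (2 * \<alpha> :: real)" using hTm by (simp add: mult.left_commute)
    ultimately show "2 ^ m * pw \<epsilon> (u i) \<le> 2 * \<alpha>" by simp
  qed
  define cM where "cM = card {i \<in> {1..k}. y i \<in> M}"
  have "L' - L \<subseteq> {i \<in> {1..k}. y i \<in> M}" using claimB memL' by auto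
  then have c1: "card (L' - L) \<le> cM" unfolding cM_def by (intro card_mono) auto
  have hM: "real cM / K < 3 * sqrt \<epsilon> / \<alpha>" using h4 by (simp add: cM_def K_def)
  have "3 * sqrt \<epsilon> / \<alpha> \<le> 3 * sqrt \<epsilon>" using halpha s0
    by (simp add: divide_le_eq mult_le_cancel_left1 less_le_not_le)
  have r1: "real (card (L' - L)) / K \<le> 3 * sqrt \<epsilon> / \<alpha>"
    using c1 hM K0 by (smt (verit) divide_right_mono of_nat_mono)
  have part_ii: "real (card (L' - L)) \<le> 3 * real k * sqrt \<epsilon>"
  proof -
    have "real (card (L' - L)) / K \<le> 3 * sqrt \<epsilon>" using r1 \<open>3 * sqrt \<epsilon> / \<alpha> \<le> 3 * sqrt \<epsilon>\<close> by linarith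
    then show ?thesis using K0 by (simp add: K_def divide_le_eq mult.commute mult.left_commute)
  qed
  have cH: "real (card ({1..k} - L)) / K = 1 - real (card L) / K"
  proof -
    have "card ({1..k} - L) + card L = k" using finL card_Diff_subset[of L "{1..k}"] card_mono[of "{1..k}" L] by auto
    then have "real (card ({1..k} - L)) + real (card L) = K" unfolding K_def by (metis of_nat_add)
    then show ?thesis using K0 by (simp add: field_simps)
  qed
  have cH': "real (card ({1..k} - L')) / K = 1 - real (card L') / K"
  proof -
    have "card ({1..k} - L') + card L' = k" using finL card_Diff_subset[of L' "{1..k}"] card_mono[of "{1..k}" L'] by auto
    then have "real (card ({1..k} - L')) + real (card L') = K" unfolding K_def by (metis of_nat_add)
    then show ?thesis using K0 by (simp add: field_simps)
  qed
  have cs1: "real (card L) / K = real (card (L \<inter> L')) / K + real (card (L - L')) / K"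
    using card_split[OF finL(1), of L'] by (simp add: add_divide_distrib)
  have cs2: "real (card L') / K = real (card (L \<inter> L')) / K + real (card (L' - L)) / K"
    using card_split[OF finL(2), of L] by (simp add: add_divide_distrib Int_commute)
  have hc': "pUH - 3 * sqrt \<epsilon> \<le> real (card ({1..k} - L)) / K"
    using hc by (simp add: pm_def K_def)
  have h6': "real (card ({1..k} - L')) / K \<le> gUH + 3 * sqrt \<epsilon>"
    using h6 by (simp add: pm_def K_def)
  have hpUH': "gUH - 10 * sqrt \<epsilon> \<le> pUH" using hpUH by (simp add: pm_def)
  have r2: "real (card (L - L')) / K \<le> 19 * sqrt \<epsilon>"
    using cH cH' cs1 cs2 hc' h6' hpUH' r1 \<open>3 * sqrt \<epsilon> / \<alpha> \<le> 3 * sqrt \<epsilon>\<close> by linarith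
  have part_iii: "real (card (L - L')) \<le> 19 * real k * sqrt \<epsilon>"
    using r2 K0 by (simp add: K_def divide_le_eq mult.commute mult.left_commute)
  define f where "f = (\<lambda>i. 2 ^ m * pw \<epsilon> (u i) :: real)"
  define f' where "f' = (\<lambda>i. 2 ^ m * pw \<epsilon> (u' i) :: real)"
  have fnn: "\<And>i. f i \<ge> 0" "\<And>i. f' i \<ge> 0" by (simp_all add: f_def f'_def pw_nonneg)
  have S1: "(1/K) * sum f L = (1/K) * sum f (L \<inter> L') + (1/K) * sum f (L - L')"
    using sum.Int_Diff[OF finL(1), of f L'] by (simp add: distrib_left)
  have S2: "(1/K) * sum f' L' = (1/K) * sum f' (L \<inter> L') + (1/K) * sum f' (L' - L)"
    using sum.Int_Diff[OF finL(2), of f' L] by (simp add: distrib_left Int_commute)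
  have B2: "(1/K) * sum f' (L' - L) \<le> 6 * sqrt \<epsilon>"
  proof -
    have "sum f' (L' - L) \<le> real (card (L' - L)) * (2 * \<alpha>)"
      using claimB by (intro sum_bounded_above) (auto simp: f'_def)
    then have "(1/K) * sum f' (L' - L) \<le> (real (card (L' - L)) / K) * (2 * \<alpha>)"
      using K0 by (simp add: divide_right_mono)
    also have "\<dots> \<le> (3 * sqrt \<epsilon> / \<alpha>) * (2 * \<alpha>)" using r1 halpha by (intro mult_right_mono) auto
    also have "\<dots> = 6 * sqrt \<epsilon>" using halpha by simp
    finally show ?thesis .
  qed
  have B3: "(1/K) * sum f (L - L') \<le> 38 * sqrt \<epsilon> * \<alpha>"
  proof -
    have "sum f (L - L') \<le> real (card (L - L')) * (2 * \<alpha>)"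
      using claimC by (intro sum_bounded_above) (auto simp: f_def)
    then have "(1/K) * sum f (L - L') \<le> (real (card (L - L')) / K) * (2 * \<alpha>)"
      using K0 by (simp add: divide_right_mono)
    also have "\<dots> \<le> (19 * sqrt \<epsilon>) * (2 * \<alpha>)" using r2 halpha by (intro mult_right_mono) auto
    also have "\<dots> = 38 * sqrt \<epsilon> * \<alpha>" by simp
    finally show ?thesis .
  qed
  have B2nn: "(1/K) * sum f' (L' - L) \<ge> 0" "(1/K) * sum f (L - L') \<ge> 0"
    using K0 fnn by (simp_all add: sum_nonneg)
  have hd': "1 - pH - 5 * sqrt \<epsilon> \<le> (1/K) * sum f L \<and> (1/K) * sum f L \<le> 1 - pH + 5 * sqrt \<epsilon>"
    using hd by (simp add: pm_def K_def f_def)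
  have h7': "1 - gH - 5 * sqrt \<epsilon> \<le> (1/K) * sum f' L' \<and> (1/K) * sum f' L' \<le> 1 - gH + 5 * sqrt \<epsilon>"
    using h7 by (simp add: pm_def K_def f'_def)
  have hpH': "gH - 4/5 * sqrt \<epsilon> \<le> pH \<and> pH \<le> gH + 4/5 * sqrt \<epsilon>" using hpH by (simp add: pm_def)
  have sa: "sqrt \<epsilon> \<le> sqrt \<epsilon> * \<alpha>" using halpha s0 by (simp add: mult_le_cancel_left1)
  have V1: "(1/K) * sum f (L \<inter> L') \<in> pm (1 - gH) (44 * sqrt \<epsilon> * \<alpha>)"
    using S1 B3 B2nn hd' hpH' sa unfolding pm_def by auto
  have V2: "(1/K) * sum f' (L \<inter> L') \<in> pm (1 - gH) (11 * sqrt \<epsilon> * \<alpha>)"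
    using S2 B2 B2nn h7' sa unfolding pm_def by auto
  define G where "G = {i \<in> L \<inter> L'. u' i > u i}"
  have gH0: "gH \<ge> 0" unfolding gH_def by (rule prD_nonneg)
  have Gterm: "\<And>i. i \<in> G \<Longrightarrow> 2 ^ m * (pw \<epsilon> (u i) - pw \<epsilon> (u' i)) \<le> \<epsilon> * f' i"
  proof -
    fix i assume iG: "i \<in> G"
    then have i: "i \<in> {1..k}" and lt: "u i < u' i" using memL unfolding G_def by auto
    have "u i \<noteq> \<infinity>" using lt by (cases "u i") auto
    then obtain a where ua: "u i = enat a" by auto
    have "u' i \<noteq> \<infinity>" using h2 i ua by auto
    then obtain j where uj: "u' i = enat j" by auto
    have "a < j" using lt ua uj by simp
    moreover have "j - 1 \<le> a" using part_i[OF i] ua uj by (simp add: one_enat_def)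
    ultimately have "j = Suc a" by simp
    then have eq: "u' i = u i + 1" using ua uj by (simp add: one_enat_def)
    have "pw \<epsilon> (u i) - pw \<epsilon> (u' i) = (2 powr \<epsilon> - 1) * pw \<epsilon> (u' i)"
      using pw_Suc'[of \<epsilon> "u i"] eq by (simp add: algebra_simps)
    also have "\<dots> \<le> \<epsilon> * pw \<epsilon> (u' i)" using e1 pw_nonneg by (intro mult_right_mono) auto
    finally show "2 ^ m * (pw \<epsilon> (u i) - pw \<epsilon> (u' i)) \<le> \<epsilon> * f' i"
      unfolding f'_def by (simp add: mult.left_commute)
  qed
  have part_gain: "Gain k m \<epsilon> (L \<inter> L') u' u \<le> 4 * \<epsilon>"
  proof -
    have finG: "finite G" "G \<subseteq> L'" using finL unfolding G_def by auto
    have "(\<Sum>i\<in>G. 2 ^ m * (pw \<epsilon> (u i) - pw \<epsilon> (u' i))) \<le> (\<Sum>i\<in>G. \<epsilon> * f' i)"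
      by (intro sum_mono Gterm)
    also have "\<dots> = \<epsilon> * sum f' G" by (simp add: sum_distrib_left)
    also have "\<dots> \<le> \<epsilon> * sum f' L'" using heps finL finG fnn by (intro mult_left_mono sum_mono2) auto
    finally have "(1/K) * (\<Sum>i\<in>G. 2 ^ m * (pw \<epsilon> (u i) - pw \<epsilon> (u' i))) \<le> \<epsilon> * ((1/K) * sum f' L')"
      using K0 by (simp add: divide_right_mono)
    also have "\<dots> \<le> \<epsilon> * 2" using h7' gH0 s5 heps by (intro mult_left_mono) auto
    finally show ?thesis using heps unfolding Gain_def G_def K_def by simp
  qed
  have LG: "Loss k m \<epsilon> (L \<inter> L') u' u - Gain k m \<epsilon> (L \<inter> L') u' u = (1/K) * sum f' (L \<inter> L') - (1/K) * sum f (L \<inter> L')"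
  proof -
    have fin: "finite (L \<inter> L')" using finL by auto
    have "(\<Sum>i \<in> {i \<in> L \<inter> L'. u' i < u i}. 2 ^ m * (pw \<epsilon> (u' i) - pw \<epsilon> (u i)))
        - (\<Sum>i \<in> {i \<in> L \<inter> L'. u' i > u i}. 2 ^ m * (pw \<epsilon> (u i) - pw \<epsilon> (u' i)))
        = (\<Sum>i \<in> L \<inter> L'. (if u' i < u i then 2 ^ m * (pw \<epsilon> (u' i) - pw \<epsilon> (u i)) else 0)
             - (if u' i > u i then 2 ^ m * (pw \<epsilon> (u i) - pw \<epsilon> (u' i)) else 0))"
      by (simp only: sum.inter_filter[OF fin] sum_subtractf)
    also have "\<dots> = (\<Sum>i \<in> L \<inter> L'. f' i - f i)"
    proof (rule sum.cong)
      fix i show "(if u' i < u i then 2 ^ m * (pw \<epsilon> (u' i) - pw \<epsilon> (u i)) else 0)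
             - (if u' i > u i then 2 ^ m * (pw \<epsilon> (u i) - pw \<epsilon> (u' i)) else 0) = f' i - f i"
        unfolding f_def f'_def by (cases "u' i < u i"; cases "u i < u' i") (auto simp: algebra_simps dest: antisym_conv3)
    qed simp
    also have "\<dots> = sum f' (L \<inter> L') - sum f (L \<inter> L')" by (simp add: sum_subtractf)
    finally show ?thesis unfolding Loss_def Gain_def K_def by (simp add: diff_divide_distrib[symmetric])
  qed
  have part_loss: "Loss k m \<epsilon> (L \<inter> L') u' u \<le> 59 * sqrt \<epsilon> * \<alpha>"
    using LG V1 V2 part_gain es sa unfolding pm_def by auto
  have B2a: "(1/K) * sum f' (L' - L) \<le> 6 * sqrt \<epsilon> * \<alpha>" using B2 sa by linarith
  show ?thesis
    using part_i part_ii part_iii B2a B3 V1 V2 part_gain part_loss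
    unfolding f_def f'_def K_def by auto
qed

end
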